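(* Let $p$ be a prime, $q$ a power of $p$, $n\ge1$ odd, $m=\frac{q^n+1}{q+1}$. Let $\Sigma$ be the set of pairs $(H,M)$ such that $H\le A(P_\infty)$ and $M\le\mu$ are subgroups with $M^m:=\{d^m:d\in M\}=\phi(H)$. For a subgroup $G\le B(Q_\infty)$ set $\Xi(G)=(\pi(G),\pi_d(G))$. Then $\Xi$ is a bijection from the set of subgroups of $B(Q_\infty)$ onto $\Sigma$.
   Context: Let $\mathcal C_n=\mathbb{F}_{q^{2n}}(x,y,z)$ be the function field defined by $x^q+x=y^{q+1}$ and $z^m=y^{q^2}-y$. Let $A(P_\infty)$ be the group of symbols $[a,b,c]$ with $a\in\mathbb{F}_{q^2}^*$, $b,c\in\mathbb{F}_{q^2}$, $c^q+c=b^{q+1}$, with group law $[a',b',c']\circ[a,b,c]=[a'a,ab'+b,a^{q+1}c'+ab^qb'+c]$ (the automorphisms $x\mapsto a^{q+1}x+ab^qy+c$, $y\mapsto ay+b$ of the Hermitian function field $\mathbb{F}_{q^2}(x,y)$), and $\phi:A(P_\infty)\to\mathbb{F}_{q^2}^*$, $[a,b,c]\mapsto a$. Let $B(Q_\infty)$ be the group of automorphisms $[a,b,c,d]$ of $\mathcal C_n$ given by $x\mapsto a^{q+1}x+ab^qy+c$, $y\mapsto ay+b$, $z\mapsto dz$, where $a\in\mathbb{F}_{q^2}^*$, $b,c\in\mathbb{F}_{q^2}$, $c^q+c=b^{q+1}$, $d\in\mathbb{F}_{q^{2n}}$, $d^m=a$; its group law is $[a',b',c',d']\circ[a,b,c,d]=[a'a,ab'+b,a^{q+1}c'+ab^qb'+c,d'd]$.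 Let $\mu\le\mathbb{F}_{q^{2n}}^*$ be the group of $(q^n+1)(q-1)$-th roots of unity. Define $\pi:B(Q_\infty)\to A(P_\infty)$, $[a,b,c,d]\mapsto[a,b,c]$, and $\pi_d:B(Q_\infty)\to\mu$, $[a,b,c,d]\mapsto d$. *)

theory Defs
  imports "HOL-Computational_Algebra.Primes" "HOL-Algebra.Group"
begin

text \<open>The ambient field F_{q^{2n}} is modelled by a finite field type 'a with
CARD('a) = q^(2n). The subfield F_{q^2} is the set of x with x^(q^2) = x.\<close>

definition Fq2 :: "nat \<Rightarrow> ('a::field) set" where
  "Fq2 q = {x. x ^ (q^2) = x}"

definition A_carrier :: "nat \<Rightarrow> ('a::field \<times> 'a \<times> 'a) set" where
  "A_carrier q = {(a,b,c). a \<in> Fq2 q \<and> a \<noteq> 0 \<and> b \<in> Fq2 q \<and> c \<in> Fq2 q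
                     \<and> c ^ q + c = b ^ (q+1)}"

definition A_mult :: "nat \<Rightarrow> ('a::field \<times> 'a \<times> 'a) \<Rightarrow> ('a \<times> 'a \<times> 'a) \<Rightarrow> ('a \<times> 'a \<times> 'a)" where
  "A_mult q = (\<lambda>(a',b',c') (a,b,c). (a'*a, a*b'+b, a^(q+1)*c' + a*b^q*b' + c))"

definition A_grp :: "nat \<Rightarrow> ('a::field \<times> 'a \<times> 'a) monoid" where
  "A_grp q = \<lparr> carrier = A_carrier q, mult = A_mult q, one = (1,0,0) \<rparr>"

definition phi :: "('a::field \<times> 'a \<times> 'a) \<Rightarrow> 'a" where
  "phi = (\<lambda>(a,b,c). a)"

definition B_carrier :: "nat \<Rightarrow> nat \<Rightarrow> ('a::field \<times> 'a \<times> 'a \<times> 'a) set" where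
  "B_carrier q m = {(a,b,c,d). (a,b,c) \<in> A_carrier q \<and> d ^ m = a}"

definition B_mult :: "nat \<Rightarrow> ('a::field \<times> 'a \<times> 'a \<times> 'a) \<Rightarrow> ('a \<times> 'a \<times> 'a \<times> 'a) \<Rightarrow> ('a \<times> 'a \<times> 'a \<times> 'a)" where
  "B_mult q = (\<lambda>(a',b',c',d') (a,b,c,d).
               (a'*a, a*b'+b, a^(q+1)*c' + a*b^q*b' + c, d'*d))"

definition B_grp :: "nat \<Rightarrow> nat \<Rightarrow> ('a::field \<times> 'a \<times> 'a \<times> 'a) monoid" where
  "B_grp q m = \<lparr> carrier = B_carrier q m, mult = B_mult q, one = (1,0,0,1) \<rparr>"

definition pi_B :: "('a \<times> 'a \<times> 'a \<times> 'a) \<Rightarrow> ('a \<times> 'a \<times> 'a)" where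
  "pi_B = (\<lambda>(a,b,c,d). (a,b,c))"

definition pi_d :: "('a \<times> 'a \<times> 'a \<times> 'a) \<Rightarrow> 'a" where
  "pi_d = (\<lambda>(a,b,c,d). d)"

definition mu_grp :: "nat \<Rightarrow> nat \<Rightarrow> ('a::field) monoid" where
  "mu_grp q n = \<lparr> carrier = {d. d ^ ((q^n+1)*(q-1)) = 1}, mult = (*), one = 1 \<rparr>"

definition Sigma_set :: "nat \<Rightarrow> nat \<Rightarrow> nat \<Rightarrow> (('a::field \<times> 'a \<times> 'a) set \<times> 'a set) set" where
  "Sigma_set q n m = {(H,M). subgroup H (A_grp q) \<and> subgroup M (mu_grp q n)
                        \<and> (\<lambda>d. d ^ m) ` M = phi ` H}"

definition Xi :: "('a \<times> 'a \<times> 'a \<times> 'a) set \<Rightarrow> ('a \<times> 'a \<times> 'a) set \<times> 'a set" where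
  "Xi G = (pi_B ` G, pi_d ` G)"

end

theory Submission
  imports Defs "HOL-Number_Theory.Residues"
begin

lemma frob_neg:
  fixes x :: "'a::field"
  assumes fr: "\<And>x y::'a. (x+y)^q = x^q + y^q" and q: "q \<ge> 1"
  shows "(-x)^q = -(x^q)"
proof -
  have "x^q + (-x)^q = (x + -x)^q" using fr[of x "-x"] by simp
  also have "\<dots> = 0" using q by simp
  finally show ?thesis by (simp add: add_eq_0_iff)
qed

lemma frob2:
  fixes x :: "'a::field"
  assumes fr: "\<And>x y::'a. (x+y)^q = x^q + y^q"
  shows "(x+y)^(q^2) = x^(q^2) + y^(q^2)"
  by (simp add: power2_eq_square power_mult fr)

lemma Fq2_mult: "x \<in> Fq2 q \<Longrightarrow> y \<in> Fq2 q \<Longrightarrow> x*y \<in> Fq2 q"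
  by (simp add: Fq2_def power_mult_distrib)

lemma Fq2_inv: "x \<in> Fq2 q \<Longrightarrow> inverse x \<in> Fq2 q"
  by (simp add: Fq2_def power_inverse)

lemma Fq2_pow: "x \<in> Fq2 q \<Longrightarrow> x ^ j \<in> Fq2 q"
  by (simp add: Fq2_def flip: power_mult) (metis mult.commute power_mult)

lemma Fq2_add:
  fixes x :: "'a::field"
  assumes fr: "\<And>x y::'a. (x+y)^q = x^q + y^q"
  shows "x \<in> Fq2 q \<Longrightarrow> y \<in> Fq2 q \<Longrightarrow> x+y \<in> Fq2 q"
  by (simp add: Fq2_def frob2[OF fr])

lemma Fq2_neg:
  fixes x :: "'a::field"
  assumes fr: "\<And>x y::'a. (x+y)^q = x^q + y^q" and q: "q \<ge> 1"
  shows "x \<in> Fq2 q \<Longrightarrow> -x \<in> Fq2 q"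
proof -
  assume "x \<in> Fq2 q"
  have "(-x)^(q^2) = -(x^(q^2))"
    by (rule frob_neg[where q="q^2"]) (use frob2[OF fr] q in auto)
  then show ?thesis using \<open>x \<in> Fq2 q\<close> by (simp add: Fq2_def)
qed

lemma Fq2_qq: "x \<in> Fq2 q \<Longrightarrow> (x^q)^q = x"
  by (simp add: Fq2_def power2_eq_square flip: power_mult)

lemma A_mult_simp: "A_mult q (a',b',c') (a,b,c) = (a'*a, a*b'+b, a^(q+1)*c' + a*b^q*b' + c)"
  by (simp add: A_mult_def)

lemma A_mult_closed:
  fixes a b c a' b' c' :: "'a::field"
  assumes fr: "\<And>x y::'a. (x+y)^q = x^q + y^q" and q: "q \<ge> 1"
    and x: "(a',b',c') \<in> A_carrier q" and y: "(a,b,c) \<in> A_carrier q"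
  shows "A_mult q (a',b',c') (a,b,c) \<in> A_carrier q"
proof -
  from x have a': "a' \<in> Fq2 q" "a' \<noteq> 0" "b' \<in> Fq2 q" "c' \<in> Fq2 q" "c'^q + c' = b'^(q+1)"
    by (auto simp: A_carrier_def)
  from y have a: "a \<in> Fq2 q" "a \<noteq> 0" "b \<in> Fq2 q" "c \<in> Fq2 q" "c^q + c = b^(q+1)"
    by (auto simp: A_carrier_def)
  define C where "C = a^(q+1)*c' + a*b^q*b' + c"
  define B where "B = a*b'+b"
  have Cq: "C^q = a*a^q*c'^q + a^q*b*b'^q + c^q"
    unfolding C_def using Fq2_qq[OF a(1)] Fq2_qq[OF a(3)]
    by (simp add: fr power_mult_distrib)
  have "C^q + C = a*a^q*(c'^q + c') + a^q*b*b'^q + a*b^q*b' + (c^q + c)"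
    unfolding Cq by (simp add: C_def algebra_simps)
  also have "\<dots> = a*a^q*b'^(q+1) + a^q*b*b'^q + a*b^q*b' + b^(q+1)"
    using a'(5) a(5) by simp
  also have "\<dots> = (a^q*b'^q + b^q)*(a*b'+b)"
    by (simp add: algebra_simps)
  also have "\<dots> = B^(q+1)"
    by (simp add: B_def fr power_mult_distrib)
  finally have rel: "C^q + C = B^(q+1)" .
  have "a'*a \<in> Fq2 q" "a*b'+b \<in> Fq2 q" "C \<in> Fq2 q"
    using a a' by (auto simp: C_def intro!: Fq2_mult Fq2_add[OF fr] Fq2_pow)
  then show ?thesis
    using rel a a' by (simp add: A_mult_simp A_carrier_def C_def B_def)
qed

lemma A_mult_assoc:
  fixes x y z :: "'a::field \<times> 'a \<times> 'a"
  assumes fr: "\<And>x y::'a. (x+y)^q = x^q + y^q"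
  shows "A_mult q (A_mult q x y) z = A_mult q x (A_mult q y z)"
proof -
  obtain a3 b3 c3 a2 b2 c2 a1 b1 c1 where "x = (a3,b3,c3)" "y = (a2,b2,c2)" "z = (a1,b1,c1)"
    by (metis prod.exhaust)
  moreover have "(a1*b2+b1)^q = a1^q*b2^q + b1^q" by (simp add: fr power_mult_distrib)
  ultimately show ?thesis
    by (simp add: A_mult_simp algebra_simps power_mult_distrib)
qed

lemma A_inv_carrier:
  fixes a b c :: "'a::field"
  assumes fr: "\<And>x y::'a. (x+y)^q = x^q + y^q" and q: "q \<ge> 1"
    and y: "(a,b,c) \<in> A_carrier q"
  shows "(inverse a, -b/a, c^q/a^(q+1)) \<in> A_carrier q"
    and "A_mult q (inverse a, -b/a, c^q/a^(q+1)) (a,b,c) = (1,0,0)"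
proof -
  from y have a: "a \<in> Fq2 q" "a \<noteq> 0" "b \<in> Fq2 q" "c \<in> Fq2 q" "c^q + c = b^(q+1)"
    by (auto simp: A_carrier_def)
  have m1: "(-1::'a)^q = -1" using frob_neg[OF fr q, of 1] by simp
  have g: "(c^q/a^(q+1))^q + c^q/a^(q+1) = (c + c^q)/a^(q+1)"
    using Fq2_qq[OF a(1)] Fq2_qq[OF a(4)] a(2)
    by (simp add: power_divide power_mult_distrib field_simps)
  also have "\<dots> = (-b/a)^(q+1)"
    using a(5) m1 a(2) by (simp add: power_divide power_minus' add.commute)
  finally have rel: "(c^q/a^(q+1))^q + c^q/a^(q+1) = (-b/a)^(q+1)" .
  have "inverse a \<in> Fq2 q" "-b/a \<in> Fq2 q" "c^q/a^(q+1) \<in> Fq2 q"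
    using a by (auto simp: divide_inverse intro!: Fq2_mult Fq2_neg[OF fr q] Fq2_pow Fq2_inv)
  then show "(inverse a, -b/a, c^q/a^(q+1)) \<in> A_carrier q"
    using rel a(2) by (simp add: A_carrier_def)
  show "A_mult q (inverse a, -b/a, c^q/a^(q+1)) (a,b,c) = (1,0,0)"
    using a(2) a(5) by (simp add: A_mult_simp field_simps)
qed

lemma group_A:
  assumes fr: "\<And>x y::'a::field. (x+y)^q = x^q + y^q" and q: "q \<ge> 1"
  shows "group (A_grp q :: ('a \<times> 'a \<times> 'a) monoid)"
proof (rule groupI)
  fix x y :: "'a \<times> 'a \<times> 'a"
  assume "x \<in> carrier (A_grp q)" "y \<in> carrier (A_grp q)"
  then show "x \<otimes>\<^bsub>A_grp q\<^esub> y \<in> carrier (A_grp q)"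
    using A_mult_closed[OF fr q] by (cases x, cases y) (auto simp: A_grp_def)
next
  show "\<one>\<^bsub>A_grp q\<^esub> \<in> carrier (A_grp q)"
    using q by (simp add: A_grp_def A_carrier_def Fq2_def)
next
  fix x y z :: "'a \<times> 'a \<times> 'a"
  show "x \<otimes>\<^bsub>A_grp q\<^esub> y \<otimes>\<^bsub>A_grp q\<^esub> z = x \<otimes>\<^bsub>A_grp q\<^esub> (y \<otimes>\<^bsub>A_grp q\<^esub> z)"
    using A_mult_assoc[OF fr] by (simp add: A_grp_def)
next
  fix x :: "'a \<times> 'a \<times> 'a"
  show "\<one>\<^bsub>A_grp q\<^esub> \<otimes>\<^bsub>A_grp q\<^esub> x = x"
    by (cases x) (simp add: A_grp_def A_mult_simp)
next
  fix x :: "'a \<times> 'a \<times> 'a"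
  assume "x \<in> carrier (A_grp q)"
  then obtain a b c where x: "x = (a,b,c)" "(a,b,c) \<in> A_carrier q"
    by (cases x) (auto simp: A_grp_def)
  show "\<exists>y\<in>carrier (A_grp q). y \<otimes>\<^bsub>A_grp q\<^esub> x = \<one>\<^bsub>A_grp q\<^esub>"
    using A_inv_carrier[OF fr q x(2)] x(1) by (auto simp: A_grp_def)
qed

lemma B_mult_simp: "B_mult q (a',b',c',d') (a,b,c,d) = (a'*a, a*b'+b, a^(q+1)*c' + a*b^q*b' + c, d'*d)"
  by (simp add: B_mult_def)

lemma B_mult_pi: "pi_B (B_mult q x y) = A_mult q (pi_B x) (pi_B y)"
  "pi_d (B_mult q x y) = pi_d x * pi_d y"
  by (cases x, cases y, simp add: B_mult_def A_mult_def pi_B_def pi_d_def)+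

lemma B_carrier_iff: "(a,b,c,d) \<in> B_carrier q m \<longleftrightarrow> (a,b,c) \<in> A_carrier q \<and> d^m = a"
  by (simp add: B_carrier_def)

lemma group_B:
  assumes fr: "\<And>x y::'a::field. (x+y)^q = x^q + y^q" and q: "q \<ge> 1" and m: "m \<ge> 1"
  shows "group (B_grp q m :: ('a \<times> 'a \<times> 'a \<times> 'a) monoid)"
proof (rule groupI)
  fix x y :: "'a \<times> 'a \<times> 'a \<times> 'a"
  assume "x \<in> carrier (B_grp q m)" "y \<in> carrier (B_grp q m)"
  then show "x \<otimes>\<^bsub>B_grp q m\<^esub> y \<in> carrier (B_grp q m)"
    using A_mult_closed[OF fr q]
    by (cases x, cases y) (auto simp: B_grp_def B_mult_simp B_carrier_iff A_mult_simp power_mult_distrib)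
next
  show "\<one>\<^bsub>B_grp q m\<^esub> \<in> carrier (B_grp q m)"
    using q by (simp add: B_grp_def B_carrier_iff A_carrier_def Fq2_def)
next
  fix x y z :: "'a \<times> 'a \<times> 'a \<times> 'a"
  obtain a3 b3 c3 d3 a2 b2 c2 d2 a1 b1 c1 d1 where
    "x = (a3,b3,c3,d3)" "y = (a2,b2,c2,d2)" "z = (a1,b1,c1,d1)"
    by (metis prod.exhaust)
  moreover have "A_mult q (A_mult q (a3,b3,c3) (a2,b2,c2)) (a1,b1,c1)
     = A_mult q (a3,b3,c3) (A_mult q (a2,b2,c2) (a1,b1,c1))" by (rule A_mult_assoc[OF fr])
  ultimately show "x \<otimes>\<^bsub>B_grp q m\<^esub> y \<otimes>\<^bsub>B_grp q m\<^esub> z = x \<otimes>\<^bsub>B_grp q m\<^esub> (y \<otimes>\<^bsub>B_grp q m\<^esub> z)"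
    by (simp add: B_grp_def B_mult_simp A_mult_simp)
next
  fix x :: "'a \<times> 'a \<times> 'a \<times> 'a"
  show "\<one>\<^bsub>B_grp q m\<^esub> \<otimes>\<^bsub>B_grp q m\<^esub> x = x"
    by (cases x) (simp add: B_grp_def B_mult_simp)
next
  fix x :: "'a \<times> 'a \<times> 'a \<times> 'a"
  assume "x \<in> carrier (B_grp q m)"
  then obtain a b c d where x: "x = (a,b,c,d)" "(a,b,c) \<in> A_carrier q" "d^m = a"
    by (cases x) (auto simp: B_grp_def B_carrier_iff)
  have "a \<noteq> 0" using x(2) by (simp add: A_carrier_def)
  then have "d \<noteq> 0" using x(3) m by auto
  have "(inverse d)^m = inverse a" using x(3) by (simp add: power_inverse)
  then show "\<exists>y\<in>carrier (B_grp q m). y \<otimes>\<^bsub>B_grp q m\<^esub> x = \<one>\<^bsub>B_grp q m\<^esub>"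
    using A_inv_carrier[OF fr q x(2)] x(1) \<open>d \<noteq> 0\<close>
    by (intro bexI[of _ "(inverse a, -b/a, c^q/a^(q+1), inverse d)"])
       (auto simp: B_grp_def B_carrier_iff B_mult_simp A_mult_simp)
qed

lemma pi_B_carrier: "x \<in> B_carrier q m \<Longrightarrow> pi_B x \<in> A_carrier q"
  by (cases x) (simp add: B_carrier_iff pi_B_def)

lemma inv_B_pi:
  fixes g :: "'a::field \<times> 'a \<times> 'a \<times> 'a"
  assumes grpA: "group (A_grp q :: ('a::field \<times> 'a \<times> 'a) monoid)"
    and grpB: "group (B_grp q m :: ('a \<times> 'a \<times> 'a \<times> 'a) monoid)"
    and g: "g \<in> B_carrier q m"
  shows "pi_B (inv\<^bsub>B_grp q m\<^esub> g) = inv\<^bsub>A_grp q\<^esub> (pi_B g)"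
    and "pi_d (inv\<^bsub>B_grp q m\<^esub> g) = inverse (pi_d g)"
proof -
  interpret B: group "B_grp q m :: ('a \<times> 'a \<times> 'a \<times> 'a) monoid" by (rule grpB)
  interpret A: group "A_grp q :: ('a \<times> 'a \<times> 'a) monoid" by (rule grpA)
  define h where "h = inv\<^bsub>B_grp q m\<^esub> g"
  have gc: "g \<in> carrier (B_grp q m)" using g by (simp add: B_grp_def)
  have hc: "h \<in> carrier (B_grp q m)" using gc unfolding h_def by (rule B.inv_closed)
  have "h \<otimes>\<^bsub>B_grp q m\<^esub> g = \<one>\<^bsub>B_grp q m\<^esub>" using gc by (simp add: h_def)
  then have hg: "B_mult q h g = (1,0,0,1)" by (simp add: B_grp_def)
  have "A_mult q (pi_B h) (pi_B g) = (1,0,0)"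
    using arg_cong[OF hg, of pi_B] by (simp only: B_mult_pi) (simp add: pi_B_def)
  then show "pi_B h = inv\<^bsub>A_grp q\<^esub> (pi_B g)"
    using hc gc pi_B_carrier[of h q m] pi_B_carrier[of g q m]
    by (intro A.inv_equality[symmetric]) (auto simp: A_grp_def B_grp_def)
  have "pi_d h * pi_d g = 1"
    using arg_cong[OF hg, of pi_d] by (simp only: B_mult_pi) (simp add: pi_d_def)
  then show "pi_d h = inverse (pi_d g)"
    by (metis inverse_unique mult.commute)
qed

lemma inv_mu:
  fixes d :: "'a::field"
  assumes "d ^ ((q^n+1)*(q-1)) = 1" and "q \<ge> 2"
  shows "inv\<^bsub>mu_grp q n\<^esub> d = inverse d"
proof -
  have N: "(q^n+1)*(q-1) \<noteq> 0" using assms(2) by simp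
  then have "d \<noteq> 0" using assms(1) by (metis power_0_left zero_neq_one)
  show ?thesis unfolding m_inv_def
    using assms(1) \<open>d \<noteq> 0\<close>
    by (intro the_equality) (auto simp: mu_grp_def power_inverse inverse_unique)
qed

lemma B_dN:
  fixes d :: "'a::field"
  assumes "(a,b,c,d) \<in> B_carrier q m" and q2: "q \<ge> 2"
  shows "d ^ (m*(q^2-1)) = 1"
proof -
  have a: "a^(q^2) = a" "a \<noteq> 0" "d^m = a" using assms(1) by (auto simp: B_carrier_iff A_carrier_def Fq2_def)
  have "q^2 = Suc (q^2-1)" using q2 by (simp add: power2_eq_square)
  then have "a^(q^2) = a^(q^2-1) * a" by (metis power_Suc2)
  with a have "a^(q^2-1) = 1" by simp
  then show ?thesis using a(3) by (simp add: power_mult)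
qed

lemma Xi_in_Sigma:
  fixes G :: "('a::field \<times> 'a \<times> 'a \<times> 'a) set"
  assumes grpA: "group (A_grp q :: ('a \<times> 'a \<times> 'a) monoid)"
    and grpB: "group (B_grp q m :: ('a \<times> 'a \<times> 'a \<times> 'a) monoid)"
    and G: "subgroup G (B_grp q m)"
    and N: "(q^n+1)*(q-1) = m*(q^2-1)" and q2: "q \<ge> 2"
  shows "Xi G \<in> Sigma_set q n m"
proof -
  interpret B: group "B_grp q m :: ('a \<times> 'a \<times> 'a \<times> 'a) monoid" by (rule grpB)
  interpret G: subgroup G "B_grp q m" by (rule G)
  have GB: "G \<subseteq> B_carrier q m" using G.subset by (simp add: B_grp_def)
  have one: "(1,0,0,1) \<in> G" using G.one_closed by (simp add: B_grp_def)
  have mul: "B_mult q g h \<in> G" if "g \<in> G" "h \<in> G" for g h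
    using G.m_closed[OF that] by (simp add: B_grp_def)
  have inv: "inv\<^bsub>B_grp q m\<^esub> g \<in> G" if "g \<in> G" for g
    using G.m_inv_closed[OF that] .
  have dN: "pi_d g ^ ((q^n+1)*(q-1)) = 1" if "g \<in> G" for g
  proof -
    obtain a b c d where g: "g = (a,b,c,d)" by (metis prod.exhaust)
    then have "(a,b,c,d) \<in> B_carrier q m" using that GB by auto
    from B_dN[OF this q2] show ?thesis unfolding N g by (simp add: pi_d_def)
  qed
  have s1: "subgroup (pi_B ` G) (A_grp q)"
  proof (rule subgroup.intro)
    show "pi_B ` G \<subseteq> carrier (A_grp q)" using GB pi_B_carrier unfolding A_grp_def by fastforce
    fix x y assume "x \<in> pi_B ` G" "y \<in> pi_B ` G"
    then obtain g h where "g \<in> G" "h \<in> G" "x = pi_B g" "y = pi_B h" by auto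
    then show "x \<otimes>\<^bsub>A_grp q\<^esub> y \<in> pi_B ` G"
      using mul[of g h] by (auto simp: A_grp_def simp flip: B_mult_pi)
  next
    show "\<one>\<^bsub>A_grp q\<^esub> \<in> pi_B ` G"
      using one by (force simp: A_grp_def pi_B_def)
  next
    fix x assume "x \<in> pi_B ` G"
    then obtain g where "g \<in> G" "x = pi_B g" by auto
    then show "inv\<^bsub>A_grp q\<^esub> x \<in> pi_B ` G"
      using inv_B_pi(1)[OF grpA grpB, of g] GB inv[of g] by (metis imageI subsetD)
  qed
  have s2: "subgroup (pi_d ` G) (mu_grp q n)"
  proof (rule subgroup.intro)
    show "pi_d ` G \<subseteq> carrier (mu_grp q n)" using dN by (auto simp: mu_grp_def)
    fix x y assume "x \<in> pi_d ` G" "y \<in> pi_d ` G"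
    then obtain g h where "g \<in> G" "h \<in> G" "x = pi_d g" "y = pi_d h" by auto
    then show "x \<otimes>\<^bsub>mu_grp q n\<^esub> y \<in> pi_d ` G"
      using mul[of g h] B_mult_pi(2)[of q g h] by (simp add: mu_grp_def) (metis imageI)
  next
    show "\<one>\<^bsub>mu_grp q n\<^esub> \<in> pi_d ` G"
      using one by (force simp: mu_grp_def pi_d_def)
  next
    fix x assume "x \<in> pi_d ` G"
    then obtain g where g: "g \<in> G" "x = pi_d g" by auto
    then have "inv\<^bsub>mu_grp q n\<^esub> x = inverse (pi_d g)"
      using inv_mu[OF dN[OF g(1)] q2] by simp
    then show "inv\<^bsub>mu_grp q n\<^esub> x \<in> pi_d ` G"
      using inv_B_pi(2)[OF grpA grpB, of g] GB inv[of g] g by (metis imageI subsetD)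
  qed
  have "(\<lambda>d. d ^ m) ` pi_d ` G = phi ` pi_B ` G"
    unfolding image_image
  proof (rule image_cong[OF refl])
    fix g assume "g \<in> G"
    then show "pi_d g ^ m = phi (pi_B g)"
      using GB by (cases g) (auto simp: pi_d_def pi_B_def phi_def B_carrier_iff)
  qed
  then show ?thesis using s1 s2 by (simp add: Xi_def Sigma_set_def)
qed

lemma pow_mod_eq:
  fixes z :: "'a::field"
  assumes "z ^ m = 1"
  shows "z ^ x = z ^ (x mod m)"
proof -
  have "z ^ x = z ^ (m * (x div m)) * z^(x mod m)"
    by (metis div_mult_mod_eq mult.commute power_add)
  then show ?thesis using assms by (simp add: power_mult)
qed

lemma B_pow1:
  fixes b c z :: "'a::field"
  shows "\<exists>C. (1,b,c,z) [^]\<^bsub>B_grp q m\<^esub> (k::nat) = (1, of_nat k * b, C, z^k)"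
proof (induction k)
  case 0 then show ?case by (simp add: B_grp_def)
next
  case (Suc k)
  then obtain C where "(1,b,c,z) [^]\<^bsub>B_grp q m\<^esub> k = (1, of_nat k * b, C, z^k)" by blast
  then show ?case
    by (intro exI[of _ "C + b^q*(of_nat k*b) + c"]) (simp add: B_grp_def B_mult_simp algebra_simps)
qed

lemma B_pow2:
  fixes C z :: "'a::field"
  shows "(1,0,C,z) [^]\<^bsub>B_grp q m\<^esub> (k::nat) = (1, 0, of_nat k * C, z^k)"
  by (induction k) (simp_all add: B_grp_def B_mult_simp algebra_simps)

lemma kernel_elt:
  fixes G :: "('a::field \<times> 'a \<times> 'a \<times> 'a) set"
  assumes G: "subgroup G (B_grp q m)"
    and char: "of_nat p = (0::'a)" and cop: "coprime p m"
    and g: "(1,b,c,z) \<in> G"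
  shows "(1,0,0,z) \<in> G"
proof -
  interpret G: subgroup G "B_grp q m" by (rule G)
  have pw: "x [^]\<^bsub>B_grp q m\<^esub> (k::nat) \<in> G" if "x \<in> G" for x k
    using that by (induction k) auto
  have zm: "z ^ m = 1" using g G.subset by (auto simp: B_grp_def B_carrier_iff)
  obtain C where C: "(1,b,c,z) [^]\<^bsub>B_grp q m\<^esub> p = (1, 0, C, z^p)"
    using B_pow1[where b=b and c=c and z=z and q=q and m=m and k=p] char by auto
  have "(1,0,C,z^p) \<in> G" using pw[OF g, of p] C by simp
  from pw[OF this, of p] have "(1,0,0,z^(p*p)) \<in> G"
    using char by (simp add: B_pow2 power_mult)
  from pw[OF this] have h: "(1,0,0,z^(p*p*j)) \<in> G" for j
    using B_pow2[where C=0 and z="z^(p*p)" and q=q and m=m] by (simp add: power_mult)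
  have "coprime (p*p) m" using cop by simp
  then obtain j where j: "[p*p*j = Suc 0] (mod m)" using cong_solve_coprime_nat by blast
  have "z^(p*p*j) = z^((p*p*j) mod m)" by (rule pow_mod_eq[OF zm])
  also have "\<dots> = z^(Suc 0 mod m)" using j by (simp add: cong_def)
  also have "\<dots> = z" using pow_mod_eq[OF zm, of "Suc 0"] by simp
  finally show ?thesis using h[of j] by simp
qed

definition Fset :: "nat \<Rightarrow> ('a::field \<times> 'a \<times> 'a) set \<Rightarrow> 'a set \<Rightarrow> ('a \<times> 'a \<times> 'a \<times> 'a) set" where
  "Fset m H M = {(a,b,c,d). (a,b,c) \<in> H \<and> d \<in> M \<and> d^m = a}"

lemma F_Xi:
  fixes G :: "('a::field \<times> 'a \<times> 'a \<times> 'a) set"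
  assumes grpA: "group (A_grp q :: ('a \<times> 'a \<times> 'a) monoid)"
    and grpB: "group (B_grp q m :: ('a \<times> 'a \<times> 'a \<times> 'a) monoid)"
    and G: "subgroup G (B_grp q m)"
    and char: "of_nat p = (0::'a)" and cop: "coprime p m" and m: "m \<ge> 1"
  shows "Fset m (pi_B ` G) (pi_d ` G) = G"
proof
  interpret B: group "B_grp q m :: ('a \<times> 'a \<times> 'a \<times> 'a) monoid" by (rule grpB)
  interpret G: subgroup G "B_grp q m" by (rule G)
  have GB: "G \<subseteq> B_carrier q m" using G.subset by (simp add: B_grp_def)
  show "G \<subseteq> Fset m (pi_B ` G) (pi_d ` G)"
  proof
    fix x assume x: "x \<in> G"
    obtain a b c d where xe: "x = (a,b,c,d)" by (metis prod.exhaust)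
    have "(a,b,c) = pi_B x" "d = pi_d x" by (simp_all add: xe pi_B_def pi_d_def)
    moreover have "d^m = a" using x GB xe by (auto simp: B_carrier_iff)
    ultimately show "x \<in> Fset m (pi_B ` G) (pi_d ` G)"
      using x xe unfolding Fset_def by (metis (mono_tags, lifting) case_prodI image_eqI mem_Collect_eq)
  qed
  show "Fset m (pi_B ` G) (pi_d ` G) \<subseteq> G"
  proof
    fix x assume xF: "x \<in> Fset m (pi_B ` G) (pi_d ` G)"
    obtain a b c d where xe: "x = (a,b,c,d)" by (metis prod.exhaust)
    have abc: "(a,b,c) \<in> pi_B ` G" and dd: "d \<in> pi_d ` G" and dm: "d^m = a"
      using xF unfolding xe Fset_def by simp_all
    obtain g1 where g1: "g1 \<in> G" "pi_B g1 = (a,b,c)" using abc by auto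
    obtain d1 where g1e: "g1 = (a,b,c,d1)" using g1(2) by (cases g1) (auto simp: pi_B_def)
    obtain g2 where g2: "g2 \<in> G" "pi_d g2 = d" using dd by auto
    have d1m: "d1^m = a" "(a,b,c) \<in> A_carrier q" using g1 GB g1e by (auto simp: B_carrier_iff)
    have a0: "a \<noteq> 0" using d1m(2) by (simp add: A_carrier_def)
    have d10: "d1 \<noteq> 0" using a0 d1m m by auto
    define h where "h = g2 \<otimes>\<^bsub>B_grp q m\<^esub> inv\<^bsub>B_grp q m\<^esub> g1"
    have hG: "h \<in> G" unfolding h_def using g1 g2 by auto
    have mm: "g2 \<otimes>\<^bsub>B_grp q m\<^esub> y = B_mult q g2 y" for y by (simp add: B_grp_def)
    have g1c: "g1 \<in> B_carrier q m" using g1 GB by auto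
    have "pi_d h = pi_d g2 * pi_d (inv\<^bsub>B_grp q m\<^esub> g1)"
      unfolding h_def mm by (rule B_mult_pi(2))
    also have "\<dots> = d * inverse d1"
      using inv_B_pi(2)[OF grpA grpB g1c] g2(2) g1e by (simp add: pi_d_def)
    finally have "pi_d h = d * inverse d1" .
    moreover obtain a' b' c' z where he: "h = (a',b',c',z)" by (metis prod.exhaust)
    ultimately have z: "z = d * inverse d1" by (simp add: pi_d_def)
    have "z^m = 1" using z dm d1m a0 by (simp add: power_mult_distrib power_inverse)
    moreover have "z^m = a'" using hG GB he by (auto simp: B_carrier_iff)
    ultimately have "(1,b',c',z) \<in> G" using hG he by simp
    from kernel_elt[OF G char cop this] have k: "(1,0,0,z) \<in> G" .
    have "B_mult q (1,0,0,z) (a,b,c,d1) \<in> G"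
      using G.m_closed[OF k g1(1)] g1e by (simp add: B_grp_def)
    moreover have "B_mult q (1,0,0,z) (a,b,c,d1) = (a,b,c,d)"
      using z d10 by (simp add: B_mult_simp)
    ultimately show "x \<in> G" using xe by simp
  qed
qed

lemma F_subgroup:
  fixes H :: "('a::field \<times> 'a \<times> 'a) set"
  assumes grpA: "group (A_grp q :: ('a \<times> 'a \<times> 'a) monoid)"
    and grpB: "group (B_grp q m :: ('a \<times> 'a \<times> 'a \<times> 'a) monoid)"
    and HM: "(H,M) \<in> Sigma_set q n m" and q2: "q \<ge> 2"
  shows "subgroup (Fset m H M) (B_grp q m)" and "Xi (Fset m H M) = (H,M)"
proof -
  interpret B: group "B_grp q m :: ('a \<times> 'a \<times> 'a \<times> 'a) monoid" by (rule grpB)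
  have H: "subgroup H (A_grp q)" and M: "subgroup M (mu_grp q n)"
    and img: "(\<lambda>d. d ^ m) ` M = phi ` H" using HM by (auto simp: Sigma_set_def)
  interpret H: subgroup H "A_grp q" by (rule H)
  interpret M: subgroup M "mu_grp q n" by (rule M)
  have HA: "H \<subseteq> A_carrier q" using H.subset by (simp add: A_grp_def)
  have MN: "d ^ ((q^n+1)*(q-1)) = 1" if "d \<in> M" for d
    using M.subset that by (auto simp: mu_grp_def)
  have Hm: "A_mult q x y \<in> H" if "x \<in> H" "y \<in> H" for x y
    using H.m_closed[OF that] by (simp add: A_grp_def)
  have Mm: "x * y \<in> M" if "x \<in> M" "y \<in> M" for x y
    using M.m_closed[OF that] by (simp add: mu_grp_def)
  show "subgroup (Fset m H M) (B_grp q m)"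
  proof (rule subgroup.intro)
    show "Fset m H M \<subseteq> carrier (B_grp q m)"
      using HA by (auto simp: Fset_def B_grp_def B_carrier_iff)
  next
    fix x y assume "x \<in> Fset m H M" "y \<in> Fset m H M"
    then obtain a b c d a' b' c' d' where xe: "x = (a',b',c',d')" "(a',b',c') \<in> H" "d' \<in> M" "d'^m = a'"
       and ye: "y = (a,b,c,d)" "(a,b,c) \<in> H" "d \<in> M" "d^m = a"
      unfolding Fset_def by auto
    have "A_mult q (a',b',c') (a,b,c) \<in> H" using Hm xe ye by simp
    moreover have "d'*d \<in> M" using Mm xe ye by simp
    ultimately show "x \<otimes>\<^bsub>B_grp q m\<^esub> y \<in> Fset m H M"
      using xe ye by (simp add: B_grp_def B_mult_simp A_mult_simp Fset_def power_mult_distrib)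
  next
    have "(1,0,0) \<in> H" using H.one_closed by (simp add: A_grp_def)
    moreover have "1 \<in> M" using M.one_closed by (simp add: mu_grp_def)
    ultimately show "\<one>\<^bsub>B_grp q m\<^esub> \<in> Fset m H M" by (simp add: B_grp_def Fset_def)
  next
    fix x assume "x \<in> Fset m H M"
    then obtain a b c d where xe: "x = (a,b,c,d)" "(a,b,c) \<in> H" "d \<in> M" "d^m = a"
      unfolding Fset_def by auto
    have xc: "x \<in> B_carrier q m" using xe HA by (auto simp: B_carrier_iff)
    define y where "y = inv\<^bsub>B_grp q m\<^esub> x"
    have yc: "y \<in> B_carrier q m" using B.inv_closed[of x] xc by (simp add: y_def B_grp_def)
    obtain a1 b1 c1 d1 where ye: "y = (a1,b1,c1,d1)" by (metis prod.exhaust)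
    have "(a1,b1,c1) = inv\<^bsub>A_grp q\<^esub> (a,b,c)"
      using inv_B_pi(1)[OF grpA grpB xc] ye xe by (simp add: y_def pi_B_def)
    then have "(a1,b1,c1) \<in> H" using H.m_inv_closed[OF xe(2)] by simp
    moreover have "d1 = inverse d"
      using inv_B_pi(2)[OF grpA grpB xc] ye xe by (simp add: y_def pi_d_def)
    then have "d1 \<in> M" using inv_mu[OF MN[OF xe(3)] q2] M.m_inv_closed[OF xe(3)] by simp
    moreover have "d1^m = a1" using yc ye by (simp add: B_carrier_iff)
    ultimately show "inv\<^bsub>B_grp q m\<^esub> x \<in> Fset m H M"
      using ye by (simp add: y_def[symmetric] Fset_def)
  qed
  have "pi_B ` Fset m H M = H"
  proof
    show "pi_B ` Fset m H M \<subseteq> H" by (auto simp: Fset_def pi_B_def)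
    show "H \<subseteq> pi_B ` Fset m H M"
    proof
      fix x assume x: "x \<in> H"
      obtain a b c where xe: "x = (a,b,c)" by (metis prod.exhaust)
      have "a \<in> phi ` H" using x xe by (force simp: phi_def)
      then obtain d where "d \<in> M" "d^m = a" using img by (metis imageE)
      then have "(a,b,c,d) \<in> Fset m H M" using x xe by (simp add: Fset_def)
      then show "x \<in> pi_B ` Fset m H M" using xe by (force simp: pi_B_def)
    qed
  qed
  moreover have "pi_d ` Fset m H M = M"
  proof
    show "pi_d ` Fset m H M \<subseteq> M" by (auto simp: Fset_def pi_d_def)
    show "M \<subseteq> pi_d ` Fset m H M"
    proof
      fix d assume d: "d \<in> M"
      then have "d^m \<in> phi ` H" using img by blast
      then obtain x where x: "x \<in> H" "phi x = d^m" by auto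
      obtain a b c where xe: "x = (a,b,c)" by (metis prod.exhaust)
      have "(a,b,c,d) \<in> Fset m H M" using x xe d by (simp add: Fset_def phi_def)
      then show "d \<in> pi_d ` Fset m H M" by (force simp: pi_d_def)
    qed
  qed
  ultimately show "Xi (Fset m H M) = (H,M)" by (simp add: Xi_def)
qed


lemma odd_dvd_aux:
  fixes q n :: nat
  assumes "odd n"
  shows "(q+1) dvd (q^n+1)"
proof -
  have "[int q = -1] (mod (int q + 1))" by (simp add: cong_iff_dvd_diff)
  then have "[int q ^ n = (-1)^n] (mod (int q + 1))" by (rule cong_pow)
  then have "[int q ^ n = -1] (mod (int q + 1))" using assms by simp
  then have "(int q + 1) dvd (int q ^ n + 1)" by (simp add: cong_iff_dvd_diff)
  then have "int (q+1) dvd int (q^n+1)" by (metis of_nat_add of_nat_1 of_nat_power)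
  then show ?thesis by (simp only: int_dvd_int_iff)
qed

theorem theorem3p5:
  fixes p q n m k :: nat
  assumes "prime p" and "k \<ge> 1" and "q = p ^ k"
    and "n \<ge> 1" and "odd n"
    and "card (UNIV :: ('a::{field,finite}) set) = q ^ (2*n)"
    and "m = (q ^ n + 1) div (q + 1)"
  shows "bij_betw (Xi :: ('a \<times> 'a \<times> 'a \<times> 'a) set \<Rightarrow> _)
           {G. subgroup G (B_grp q m)} (Sigma_set q n m)"
proof -
  have p2: "p \<ge> 2" using assms(1) by (simp add: prime_ge_2_nat)
  have "p ^ 1 \<le> p ^ k" using assms(2) p2 by (intro power_increasing) auto
  then have "p \<le> q" using assms(3) by simp
  then have q2: "q \<ge> 2" using p2 by simp
  have "CHAR('a) > 0" by (simp add: finite_imp_CHAR_pos)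
  then have pc: "prime CHAR('a)" by (rule prime_CHAR_semidom)
  have "CHAR('a) dvd p ^ (k*(2*n))" using CHAR_dvd_CARD[where 'a='a] assms(3,6)
    by (simp add: power_mult)
  then have "CHAR('a) dvd p" using pc prime_dvd_power by blast
  then have cp: "CHAR('a) = p" using pc assms(1) by (simp add: primes_dvd_imp_eq)
  have char: "of_nat p = (0::'a)" using cp by (metis of_nat_CHAR)
  have fr: "\<And>x y::'a. (x+y)^q = x^q + y^q"
    using freshmans_dream'[where 'a='a, OF pc, of q k] cp assms(3) by simp
  have q1: "q \<ge> 1" using q2 by simp
  have dv: "(q+1) dvd (q^n+1)" using odd_dvd_aux[OF assms(5)] .
  then have mq: "m*(q+1) = q^n+1" using assms(7) by (metis dvd_div_mult_self)
  have m1: "m \<ge> 1"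
  proof (rule ccontr)
    assume "\<not> m \<ge> 1" then have "m = 0" by simp
    with mq show False by simp
  qed
  have N: "(q^n+1)*(q-1) = m*(q^2-1)"
  proof -
    have "q^2-1 = (q+1)*(q-1)" by (simp add: power2_eq_square algebra_simps)
    then show ?thesis using mq by (metis mult.assoc)
  qed
  have cop: "coprime p m"
  proof -
    have "\<not> p dvd m"
    proof
      assume "p dvd m"
      then have "p dvd q^n+1" using mq by (metis dvd_mult2)
      moreover have "p dvd q^n"
      proof -
        have "k*n > 0" using assms(2,4) by simp
        then have "p dvd p^(k*n)" by (simp add: dvd_power)
        then show ?thesis using assms(3) by (simp add: power_mult)
      qed
      ultimately have "p dvd 1" by (metis dvd_add_right_iff)
      then show False using assms(1) by simp
    qed
    then show ?thesis using assms(1) by (simp add: prime_imp_coprime)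
  qed
  have grpA: "group (A_grp q :: ('a \<times> 'a \<times> 'a) monoid)" by (rule group_A[OF fr q1])
  have grpB: "group (B_grp q m :: ('a \<times> 'a \<times> 'a \<times> 'a) monoid)" by (rule group_B[OF fr q1 m1])
  show ?thesis
  proof (rule bij_betw_byWitness[where f'="\<lambda>(H,M). Fset m H M"])
    show "\<forall>G\<in>{G. subgroup G (B_grp q m :: ('a \<times> 'a \<times> 'a \<times> 'a) monoid)}. (\<lambda>(H,M). Fset m H M) (Xi G) = G"
    proof
      fix G :: "('a \<times> 'a \<times> 'a \<times> 'a) set"
      assume "G \<in> {G. subgroup G (B_grp q m)}"
      then have "subgroup G (B_grp q m)" by simp
      from F_Xi[OF grpA grpB this char cop m1]
      show "(\<lambda>(H,M). Fset m H M) (Xi G) = G" by (simp add: Xi_def)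
    qed
    show "\<forall>a'\<in>(Sigma_set q n m :: (('a \<times> 'a \<times> 'a) set \<times> 'a set) set). Xi ((\<lambda>(H,M). Fset m H M) a') = a'"
      using F_subgroup(2)[OF grpA grpB _ q2] by auto
    show "Xi ` {G. subgroup G (B_grp q m :: ('a \<times> 'a \<times> 'a \<times> 'a) monoid)} \<subseteq> Sigma_set q n m"
      using Xi_in_Sigma[OF grpA grpB _ N q2] by auto
    show "(\<lambda>(H,M). Fset m H M) ` Sigma_set q n m \<subseteq> {G. subgroup G (B_grp q m :: ('a \<times> 'a \<times> 'a \<times> 'a) monoid)}"
      using F_subgroup(1)[OF grpA grpB _ q2] by auto
  qed
qed

end
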